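(* Let $G$ be a group, $H\le G$ with $[G:H]=m$, and $f_1,\dots,f_s:H\to G$ homomorphisms such that $G$ is self-similar and finite-state with respect to the $G$-data $((m,\dots,m),(H,\dots,H),(f_1,\dots,f_s))$ ($s$ entries each). Consider the following two $G^s$-data: (1) $((m^s,\dots,m^s),(H^s,\dots,H^s),(\rho_1,\dots,\rho_s))$ ($s$ entries each), where for $j=1,\dots,s$ the homomorphism $\rho_j:H^s\to G^s$ is $(h_1,\dots,h_s)\mapsto(h_1^{f_{j}},h_2^{f_{j+1}},\dots,h_s^{f_{j+s-1}})$, indices of the $f$'s taken modulo $s$ in $\{1,\dots,s\}$; (2) $((m^s,1),(H^s,G^s),(\rho,\tau))$, where $\rho:H^s\to G^s$, $(h_1,\dots,h_s)\mapsto(h_1^{f_1},\dots,h_s^{f_s})$, and $\tau:G^s\to G^s$, $(g_1,\dots,g_s)\mapsto(g_s,g_1,\dots,g_{s-1})$. Then each of these data is simple and $G^s$ is finite-state with respect to each of them.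
   Context: For $m\ge2$, $\mathcal A_m$ is the automorphism group of the one-rooted $m$-regular tree; each $\alpha\in\mathcal A_m$ is written $\alpha=(\alpha_1,\dots,\alpha_m)\sigma(\alpha)$ with $\sigma(\alpha)\in S_m$ the first-level action and $\alpha_i$ the states; $Q(\alpha)=\{\alpha\}\cup\bigcup_iQ(\alpha_i)$, $\alpha$ is finite-state if $Q(\alpha)$ is finite, and $\mathcal F_m$ is the group of finite-state automorphisms. Conventions: maps written on the right ($h^f$). A $G$-data $(\mathbf m,\mathbf H,\mathbf F)$ consists of subgroups $H_1,\dots,H_s$ with $[G:H_i]=m_i$, $m=\sum m_i$, and homomorphisms (virtual endomorphisms) $f_i:H_i\to G$. Choosing right transversals $T_i$ of $H_i$, with $\theta_i(g,t)=tg(t')^{-1}$ where $H_it'=H_itg$ and $g^\sigma$ the permutation $t\mapsto t'$ of $T_1\sqcup\dots\sqcup T_s\cong\{1,\dots,m\}$, the data induces $\varphi:G\to\mathcal A_m$, $g^\varphi=((\theta_i(g,t)^{f_i})^\varphi\mid t\in T_i,1\le i\le s)\,g^\sigma$, whose kernel is the $\mathbf F$-core: the largest subgroup of $\bigcap_iH_i$ normal in $G$ and $f_i$-invariant for all $i$ ($K$ is $f$-invariant if $K\subseteq\mathrm{dom}(f)$ and $K^f\le K$). The data is simple if the $\mathbf F$-core is trivial; the group is then self-similar with respect to it, and it is finite-state with respect to it if for some choice of transversals its image under $\varphi$ lies in $\mathcal F_m$. *)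

theory Defs
  imports "HOL-Algebra.Algebra"
begin

(* A G-data is a list of triples (m_i, H_i, f_i): H_i a subgroup of G of index m_i
   (finite) and f_i : H_i -> G a homomorphism (virtual endomorphism). *)
definition G_data :: "('a, 'b) monoid_scheme \<Rightarrow> (nat \<times> 'a set \<times> ('a \<Rightarrow> 'a)) list \<Rightarrow> bool" where
  "G_data G D \<longleftrightarrow> group G \<and>
     (\<forall>i < length D. subgroup (fst (snd (D!i))) G
        \<and> finite (rcosets\<^bsub>G\<^esub> (fst (snd (D!i))))
        \<and> card (rcosets\<^bsub>G\<^esub> (fst (snd (D!i)))) = fst (D!i)
        \<and> snd (snd (D!i)) \<in> hom (G\<lparr>carrier := fst (snd (D!i))\<rparr>) G)"

definition Fcore_cand :: "('a, 'b) monoid_scheme \<Rightarrow> (nat \<times> 'a set \<times> ('a \<Rightarrow> 'a)) list \<Rightarrow> 'a set \<Rightarrow> bool" where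
  "Fcore_cand G D K \<longleftrightarrow> subgroup K G \<and> K \<subseteq> (\<Inter>i<length D. fst (snd (D!i))) \<and> K \<lhd> G \<and>
     (\<forall>i < length D. K \<subseteq> fst (snd (D!i)) \<and> snd (snd (D!i)) ` K \<subseteq> K)"

definition is_Fcore :: "('a, 'b) monoid_scheme \<Rightarrow> (nat \<times> 'a set \<times> ('a \<Rightarrow> 'a)) list \<Rightarrow> 'a set \<Rightarrow> bool" where
  "is_Fcore G D K \<longleftrightarrow> Fcore_cand G D K \<and> (\<forall>K'. Fcore_cand G D K' \<longrightarrow> K' \<subseteq> K)"

definition simple_data :: "('a, 'b) monoid_scheme \<Rightarrow> (nat \<times> 'a set \<times> ('a \<Rightarrow> 'a)) list \<Rightarrow> bool" where
  "simple_data G D \<longleftrightarrow> is_Fcore G D {\<one>\<^bsub>G\<^esub>}"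

definition right_transversal :: "('a, 'b) monoid_scheme \<Rightarrow> 'a set \<Rightarrow> 'a set \<Rightarrow> bool" where
  "right_transversal G H T \<longleftrightarrow> T \<subseteq> carrier G \<and>
     (\<forall>g \<in> carrier G. \<exists>!t. t \<in> T \<and> H #>\<^bsub>G\<^esub> t = H #>\<^bsub>G\<^esub> g)"

definition alphabet :: "(nat \<times> 'a set \<times> ('a \<Rightarrow> 'a)) list \<Rightarrow> (nat \<Rightarrow> 'a set) \<Rightarrow> (nat \<times> 'a) set" where
  "alphabet D Ts = {(i, t). i < length D \<and> t \<in> Ts i}"

(* Action of g^\<phi> on words (vertices of the tree); maps on the right:
   (x w)^{g^\<phi>} = x^{g^\<sigma>} w^{(\<theta>_i(g,x)^{f_i})^\<phi>} *)
fun phi_act :: "('a, 'b) monoid_scheme \<Rightarrow> (nat \<times> 'a set \<times> ('a \<Rightarrow> 'a)) list \<Rightarrow> (nat \<Rightarrow> 'a set)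
                 \<Rightarrow> 'a \<Rightarrow> (nat \<times> 'a) list \<Rightarrow> (nat \<times> 'a) list" where
  "phi_act G D Ts g [] = []"
| "phi_act G D Ts g (x # w) =
     (let i = fst x; t = snd x; H = fst (snd (D!i)); f = snd (snd (D!i));
          t' = (THE t'. t' \<in> Ts i \<and> H #>\<^bsub>G\<^esub> t' = H #>\<^bsub>G\<^esub> (t \<otimes>\<^bsub>G\<^esub> g))
      in (i, t') # phi_act G D Ts (f (t \<otimes>\<^bsub>G\<^esub> g \<otimes>\<^bsub>G\<^esub> inv\<^bsub>G\<^esub> t')) w)"

definition section_at :: "'x set \<Rightarrow> ('x list \<Rightarrow> 'x list) \<Rightarrow> 'x list \<Rightarrow> ('x list \<Rightarrow> 'x list)" where
  "section_at Y a u = restrict (\<lambda>w. drop (length u) (a (u @ w))) {w. set w \<subseteq> Y}"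

definition finite_state_aut :: "'x set \<Rightarrow> ('x list \<Rightarrow> 'x list) \<Rightarrow> bool" where
  "finite_state_aut Y a \<longleftrightarrow> finite {section_at Y a u | u. set u \<subseteq> Y}"

definition finite_state_data :: "('a, 'b) monoid_scheme \<Rightarrow> (nat \<times> 'a set \<times> ('a \<Rightarrow> 'a)) list \<Rightarrow> bool" where
  "finite_state_data G D \<longleftrightarrow> (\<exists>Ts. (\<forall>i < length D. right_transversal G (fst (snd (D!i))) (Ts i)) \<and>
      (\<forall>g \<in> carrier G. finite_state_aut (alphabet D Ts) (phi_act G D Ts g)))"

(* G^s and H^s, indices 0..s-1 *)
definition power_group :: "('a, 'b) monoid_scheme \<Rightarrow> nat \<Rightarrow> (nat \<Rightarrow> 'a) monoid" where
  "power_group G s = product_group {..<s} (\<lambda>_. G)"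

definition power_set :: "'a set \<Rightarrow> nat \<Rightarrow> (nat \<Rightarrow> 'a) set" where
  "power_set H s = (\<Pi>\<^sub>E k\<in>{..<s}. H)"

(* \<rho>_j (0-indexed j): component k gets f_{(j+k) mod s} *)
definition rho_shift :: "nat \<Rightarrow> (nat \<Rightarrow> 'a \<Rightarrow> 'a) \<Rightarrow> nat \<Rightarrow> (nat \<Rightarrow> 'a) \<Rightarrow> (nat \<Rightarrow> 'a)" where
  "rho_shift s f j h = (\<lambda>k\<in>{..<s}. f ((j + k) mod s) (h k))"

definition tau_shift :: "nat \<Rightarrow> (nat \<Rightarrow> 'a) \<Rightarrow> (nat \<Rightarrow> 'a)" where
  "tau_shift s g = (\<lambda>k\<in>{..<s}. g ((k + s - 1) mod s))"

end

theory Submission imports Defs begin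

lemma coset_eq_iff:
  assumes "group G" "subgroup H G" "a \<in> carrier G" "b \<in> carrier G"
  shows "(H #>\<^bsub>G\<^esub> a = H #>\<^bsub>G\<^esub> b) \<longleftrightarrow> a \<otimes>\<^bsub>G\<^esub> inv\<^bsub>G\<^esub> b \<in> H"
proof
  assume eq: "H #>\<^bsub>G\<^esub> a = H #>\<^bsub>G\<^esub> b"
  have "a \<in> H #>\<^bsub>G\<^esub> a" by (rule group.rcos_self[OF assms(1,3,2)])
  then have "a \<in> H #>\<^bsub>G\<^esub> b" using eq by simp
  then show "a \<otimes>\<^bsub>G\<^esub> inv\<^bsub>G\<^esub> b \<in> H"
    by (rule subgroup.rcos_module_imp[OF assms(2,1,4)])
next
  assume "a \<otimes>\<^bsub>G\<^esub> inv\<^bsub>G\<^esub> b \<in> H"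
  then have "a \<in> H #>\<^bsub>G\<^esub> b" by (rule subgroup.rcos_module_rev[OF assms(2,1,4,3)])
  then show "H #>\<^bsub>G\<^esub> a = H #>\<^bsub>G\<^esub> b" by (rule group.repr_independence[OF assms(1) _ assms(4,2), symmetric])
qed

lemma pg_group: "group G \<Longrightarrow> group (power_group G s)"
  unfolding power_group_def by simp

lemma pg_carrier[simp]: "carrier (power_group G s) = (\<Pi>\<^sub>E k\<in>{..<s}. carrier G)"
  unfolding power_group_def by simp

lemma pg_mult[simp]: "x \<otimes>\<^bsub>power_group G s\<^esub> y = (\<lambda>k\<in>{..<s}. x k \<otimes>\<^bsub>G\<^esub> y k)"
  unfolding power_group_def by simp

lemma pg_one[simp]: "\<one>\<^bsub>power_group G s\<^esub> = (\<lambda>k\<in>{..<s}. \<one>\<^bsub>G\<^esub>)"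
  unfolding power_group_def by simp

lemma pg_inv[simp]: "group G \<Longrightarrow> x \<in> (\<Pi>\<^sub>E k\<in>{..<s}. carrier G) \<Longrightarrow>
   inv\<^bsub>power_group G s\<^esub> x = (\<lambda>k\<in>{..<s}. inv\<^bsub>G\<^esub> x k)"
  unfolding power_group_def by simp

lemma PiE_carrier:
  assumes "\<forall>k<s. T k \<subseteq> carrier G" "x \<in> (\<Pi>\<^sub>E k\<in>{..<s}. T k)"
  shows "x \<in> carrier (power_group G s)"
proof -
  have "(\<Pi>\<^sub>E k\<in>{..<s}. T k) \<subseteq> (\<Pi>\<^sub>E k\<in>{..<s}. carrier G)"
    by (rule PiE_mono) (use assms(1) in auto)
  then show ?thesis using assms(2) by auto
qed

lemma ps_subgroup: "group G \<Longrightarrow> subgroup H G \<Longrightarrow> subgroup (power_set H s) (power_group G s)"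
  unfolding power_group_def power_set_def
  by (subst PiE_subgroup_product_group) auto

lemma prod_coset:
  assumes "group G" "subgroup H G" "a \<in> carrier (power_group G s)" "b \<in> carrier (power_group G s)"
  shows "(power_set H s #>\<^bsub>power_group G s\<^esub> a = power_set H s #>\<^bsub>power_group G s\<^esub> b)
     \<longleftrightarrow> (\<forall>k<s. H #>\<^bsub>G\<^esub> a k = H #>\<^bsub>G\<^esub> b k)"
proof -
  have "(power_set H s #>\<^bsub>power_group G s\<^esub> a = power_set H s #>\<^bsub>power_group G s\<^esub> b)
     \<longleftrightarrow> a \<otimes>\<^bsub>power_group G s\<^esub> inv\<^bsub>power_group G s\<^esub> b \<in> power_set H s"
    by (rule coset_eq_iff[OF pg_group[OF assms(1)] ps_subgroup[OF assms(1,2)] assms(3,4)])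
  also have "\<dots> \<longleftrightarrow> (\<forall>k<s. a k \<otimes>\<^bsub>G\<^esub> inv\<^bsub>G\<^esub> b k \<in> H)"
    using assms(4) by (auto simp: power_set_def assms(1) Pi_iff PiE_iff)
  also have "\<dots> \<longleftrightarrow> (\<forall>k<s. H #>\<^bsub>G\<^esub> a k = H #>\<^bsub>G\<^esub> b k)"
    using assms coset_eq_iff[OF assms(1,2)] by (auto simp: PiE_iff)
  finally show ?thesis .
qed


lemma trans_THE:
  assumes "right_transversal G H T" "g \<in> carrier G"
  shows "(THE t. t \<in> T \<and> H #>\<^bsub>G\<^esub> t = H #>\<^bsub>G\<^esub> g) \<in> T \<and>
         H #>\<^bsub>G\<^esub> (THE t. t \<in> T \<and> H #>\<^bsub>G\<^esub> t = H #>\<^bsub>G\<^esub> g) = H #>\<^bsub>G\<^esub> g"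
proof -
  have "\<exists>!t. t \<in> T \<and> H #>\<^bsub>G\<^esub> t = H #>\<^bsub>G\<^esub> g"
    using assms unfolding right_transversal_def by blast
  then show ?thesis by (rule theI')
qed

lemma prod_transversal:
  assumes "group G" "subgroup H G" "\<forall>k<s. right_transversal G H (T k)"
  shows "right_transversal (power_group G s) (power_set H s) (\<Pi>\<^sub>E k\<in>{..<s}. T k)"
  unfolding right_transversal_def
proof (intro conjI ballI)
  show "(\<Pi>\<^sub>E k\<in>{..<s}. T k) \<subseteq> carrier (power_group G s)"
    using assms(3) by (force simp: right_transversal_def PiE_iff)
  fix g assume g: "g \<in> carrier (power_group G s)"
  define t0 where "t0 = (\<lambda>k\<in>{..<s}. THE t. t \<in> T k \<and> H #>\<^bsub>G\<^esub> t = H #>\<^bsub>G\<^esub> g k)"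
  have gk: "\<And>k. k < s \<Longrightarrow> g k \<in> carrier G" using g by auto
  have t0: "\<And>k. k < s \<Longrightarrow> t0 k \<in> T k \<and> H #>\<^bsub>G\<^esub> t0 k = H #>\<^bsub>G\<^esub> g k"
  proof -
    fix k assume k: "k < s"
    have "t0 k = (THE t. t \<in> T k \<and> H #>\<^bsub>G\<^esub> t = H #>\<^bsub>G\<^esub> g k)" using k by (simp add: t0_def)
    then show "t0 k \<in> T k \<and> H #>\<^bsub>G\<^esub> t0 k = H #>\<^bsub>G\<^esub> g k"
      using trans_THE[OF assms(3)[rule_format, OF k] gk[OF k]] by simp
  qed
  have t0T: "t0 \<in> (\<Pi>\<^sub>E k\<in>{..<s}. T k)" using t0 by (auto simp: t0_def)
  have TC: "\<And>k. k < s \<Longrightarrow> T k \<subseteq> carrier G" using assms(3) by (auto simp: right_transversal_def)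
  have t0C: "t0 \<in> carrier (power_group G s)" using t0T TC by (auto simp: PiE_iff)
  show "\<exists>!t. t \<in> (\<Pi>\<^sub>E k\<in>{..<s}. T k) \<and>
     power_set H s #>\<^bsub>power_group G s\<^esub> t = power_set H s #>\<^bsub>power_group G s\<^esub> g"
  proof (rule ex1I[of _ t0])
    show "t0 \<in> (\<Pi>\<^sub>E k\<in>{..<s}. T k) \<and>
     power_set H s #>\<^bsub>power_group G s\<^esub> t0 = power_set H s #>\<^bsub>power_group G s\<^esub> g"
      using t0T prod_coset[OF assms(1,2) t0C g] t0 by simp
  next
    fix t assume t: "t \<in> (\<Pi>\<^sub>E k\<in>{..<s}. T k) \<and>
     power_set H s #>\<^bsub>power_group G s\<^esub> t = power_set H s #>\<^bsub>power_group G s\<^esub> g"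
    have tC: "t \<in> carrier (power_group G s)" using t TC by (auto simp: PiE_iff)
    have "\<And>k. k < s \<Longrightarrow> t k = t0 k"
    proof -
      fix k assume k: "k < s"
      have "t k \<in> T k" "H #>\<^bsub>G\<^esub> t k = H #>\<^bsub>G\<^esub> g k"
        using t prod_coset[OF assms(1,2) tC g] k by auto
      then show "t k = t0 k" using t0[OF k] assms(3) k gk[OF k]
        unfolding right_transversal_def by metis
    qed
    then show "t = t0" using t t0T by (auto simp: PiE_iff intro!: extensionalityI)
  qed
qed

lemma prod_THE:
  assumes "group G" "subgroup H G" "\<forall>k<s. right_transversal G H (T k)"
    "g \<in> carrier (power_group G s)"
  shows "(THE t. t \<in> (\<Pi>\<^sub>E k\<in>{..<s}. T k) \<and>
     power_set H s #>\<^bsub>power_group G s\<^esub> t = power_set H s #>\<^bsub>power_group G s\<^esub> g)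
    = (\<lambda>k\<in>{..<s}. THE t. t \<in> T k \<and> H #>\<^bsub>G\<^esub> t = H #>\<^bsub>G\<^esub> g k)"
proof -
  define t0 where "t0 = (\<lambda>k\<in>{..<s}. THE t. t \<in> T k \<and> H #>\<^bsub>G\<^esub> t = H #>\<^bsub>G\<^esub> g k)"
  have gk: "\<And>k. k < s \<Longrightarrow> g k \<in> carrier G" using assms(4) by auto
  have t0: "\<And>k. k < s \<Longrightarrow> t0 k \<in> T k \<and> H #>\<^bsub>G\<^esub> t0 k = H #>\<^bsub>G\<^esub> g k"
  proof -
    fix k assume k: "k < s"
    have "t0 k = (THE t. t \<in> T k \<and> H #>\<^bsub>G\<^esub> t = H #>\<^bsub>G\<^esub> g k)" using k by (simp add: t0_def)
    then show "t0 k \<in> T k \<and> H #>\<^bsub>G\<^esub> t0 k = H #>\<^bsub>G\<^esub> g k"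
      using trans_THE[OF assms(3)[rule_format, OF k] gk[OF k]] by simp
  qed
  have t0T: "t0 \<in> (\<Pi>\<^sub>E k\<in>{..<s}. T k)" using t0 by (auto simp: t0_def)
  have TC: "\<And>k. k < s \<Longrightarrow> T k \<subseteq> carrier G" using assms(3) by (auto simp: right_transversal_def)
  have t0C: "t0 \<in> carrier (power_group G s)" using t0T TC by (auto simp: PiE_iff)
  have P: "t0 \<in> (\<Pi>\<^sub>E k\<in>{..<s}. T k) \<and>
     power_set H s #>\<^bsub>power_group G s\<^esub> t0 = power_set H s #>\<^bsub>power_group G s\<^esub> g"
      using t0T prod_coset[OF assms(1,2) t0C assms(4)] t0 by simp
  have U: "\<exists>!t. t \<in> (\<Pi>\<^sub>E k\<in>{..<s}. T k) \<and>
     power_set H s #>\<^bsub>power_group G s\<^esub> t = power_set H s #>\<^bsub>power_group G s\<^esub> g"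
    using prod_transversal[OF assms(1-3)] assms(4) unfolding right_transversal_def by blast
  have "(THE t. t \<in> (\<Pi>\<^sub>E k\<in>{..<s}. T k) \<and>
     power_set H s #>\<^bsub>power_group G s\<^esub> t = power_set H s #>\<^bsub>power_group G s\<^esub> g) = t0"
  proof (rule the_equality)
    show "t0 \<in> (\<Pi>\<^sub>E k\<in>{..<s}. T k) \<and>
     power_set H s #>\<^bsub>power_group G s\<^esub> t0 = power_set H s #>\<^bsub>power_group G s\<^esub> g" by (rule P)
  next
    fix t assume "t \<in> (\<Pi>\<^sub>E k\<in>{..<s}. T k) \<and>
     power_set H s #>\<^bsub>power_group G s\<^esub> t = power_set H s #>\<^bsub>power_group G s\<^esub> g"
    with U P show "t = t0" by blast
  qed
  then show ?thesis unfolding t0_def .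
qed

lemma trans_bij:
  assumes "group G" "subgroup H G" "right_transversal G H T"
  shows "bij_betw (\<lambda>t. H #>\<^bsub>G\<^esub> t) T (rcosets\<^bsub>G\<^esub> H)"
proof -
  have TC: "T \<subseteq> carrier G" using assms(3) by (simp add: right_transversal_def)
  have HC: "H \<subseteq> carrier G" by (rule subgroup.subset[OF assms(2)])
  show ?thesis unfolding bij_betw_def
  proof (intro conjI)
    show "inj_on (\<lambda>t. H #>\<^bsub>G\<^esub> t) T"
    proof (rule inj_onI)
      fix x y assume "x \<in> T" "y \<in> T" "H #>\<^bsub>G\<^esub> x = H #>\<^bsub>G\<^esub> y"
      then show "x = y" using assms(3) TC unfolding right_transversal_def by (metis subsetD)
    qed
    show "(\<lambda>t. H #>\<^bsub>G\<^esub> t) ` T = rcosets\<^bsub>G\<^esub> H"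
    proof
      show "(\<lambda>t. H #>\<^bsub>G\<^esub> t) ` T \<subseteq> rcosets\<^bsub>G\<^esub> H"
        using TC HC group.rcosetsI[OF assms(1)] by blast
      show "rcosets\<^bsub>G\<^esub> H \<subseteq> (\<lambda>t. H #>\<^bsub>G\<^esub> t) ` T"
      proof
        fix Z assume "Z \<in> rcosets\<^bsub>G\<^esub> H"
        then obtain g where g: "g \<in> carrier G" "Z = H #>\<^bsub>G\<^esub> g" unfolding RCOSETS_def by auto
        then obtain t where "t \<in> T" "H #>\<^bsub>G\<^esub> t = H #>\<^bsub>G\<^esub> g"
          using assms(3) unfolding right_transversal_def by blast
        then show "Z \<in> (\<lambda>t. H #>\<^bsub>G\<^esub> t) ` T" using g by auto
      qed
    qed
  qed
qed


lemma phi_act_length[simp]: "length (phi_act G D Ts g w) = length w"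
  by (induction w arbitrary: g) (auto simp: Let_def)

lemma section_restrict:
  fixes s :: nat
  assumes app: "\<And>u w. set u \<subseteq> Y \<Longrightarrow> set w \<subseteq> Y \<Longrightarrow> a (u @ w) = P Az u @ P (adv Az u) w"
    and len: "\<And>A u. length (P A u) = length u"
    and cong: "\<And>A B w. (\<forall>k<s. \<forall>v. set v \<subseteq> XX \<longrightarrow> A k v = B k v) \<Longrightarrow> set w \<subseteq> Y \<Longrightarrow> P A w = P B w"
    and invr: "\<And>u. set u \<subseteq> Y \<Longrightarrow> \<forall>k<s. restrict (adv Az u k) {v. set v \<subseteq> XX} \<in> S"
    and fin: "finite S"
  shows "finite_state_aut Y a"
proof -
  let ?F = "\<lambda>B. restrict (P B) {w. set w \<subseteq> Y}"
  have "{section_at Y a u | u. set u \<subseteq> Y} \<subseteq> ?F ` (\<Pi>\<^sub>E k\<in>{..<s}. S)"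
  proof
    fix z assume "z \<in> {section_at Y a u | u. set u \<subseteq> Y}"
    then obtain u where u: "set u \<subseteq> Y" "z = section_at Y a u" by blast
    define B where "B = (\<lambda>k\<in>{..<s}. restrict (adv Az u k) {v. set v \<subseteq> XX})"
    have B: "B \<in> (\<Pi>\<^sub>E k\<in>{..<s}. S)" using invr[OF u(1)] by (auto simp: B_def)
    have "z = ?F B"
      unfolding u(2) section_at_def
    proof (rule restrict_ext)
      fix w assume w: "w \<in> {w. set w \<subseteq> Y}"
      have "drop (length u) (a (u @ w)) = P (adv Az u) w" using app[OF u(1)] w len by simp
      also have "\<dots> = P B w" by (rule cong) (use w in \<open>auto simp: B_def\<close>)
      finally show "drop (length u) (a (u @ w)) = P B w" .
    qed
    then show "z \<in> ?F ` (\<Pi>\<^sub>E k\<in>{..<s}. S)" using B by blast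
  qed
  moreover have "finite (?F ` (\<Pi>\<^sub>E k\<in>{..<s}. S))" by (rule finite_imageI, rule finite_PiE) (simp_all add: fin)
  ultimately show ?thesis unfolding finite_state_aut_def by (rule finite_subset)
qed


fun Phi1 :: "nat \<Rightarrow> (nat \<Rightarrow> (nat \<times> 'a) list \<Rightarrow> (nat \<times> 'a) list) \<Rightarrow> (nat \<times> (nat \<Rightarrow> 'a)) list \<Rightarrow> (nat \<times> (nat \<Rightarrow> 'a)) list" where
  "Phi1 s A [] = []"
| "Phi1 s A (x # w) = (fst x, \<lambda>k\<in>{..<s}. snd (hd (A k [((fst x + k) mod s, snd x k)])))
      # Phi1 s (\<lambda>k v. tl (A k (((fst x + k) mod s, snd x k) # v))) w"

fun adv1 :: "nat \<Rightarrow> (nat \<Rightarrow> (nat \<times> 'a) list \<Rightarrow> (nat \<times> 'a) list) \<Rightarrow> (nat \<times> (nat \<Rightarrow> 'a)) list \<Rightarrow> (nat \<Rightarrow> (nat \<times> 'a) list \<Rightarrow> (nat \<times> 'a) list)" where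
  "adv1 s A [] = A"
| "adv1 s A (x # w) = adv1 s (\<lambda>k v. tl (A k (((fst x + k) mod s, snd x k) # v))) w"

lemma Phi1_append: "Phi1 s A (u @ w) = Phi1 s A u @ Phi1 s (adv1 s A u) w"
  by (induction u arbitrary: A) auto

lemma Phi1_length: "length (Phi1 s A u) = length u"
  by (induction u arbitrary: A) auto

lemma Phi1_cong:
  assumes "\<forall>k<s. \<forall>v. set v \<subseteq> XX \<longrightarrow> A k v = B k v" "set w \<subseteq> Y"
    "\<forall>x\<in>Y. \<forall>k<s. ((fst x + k) mod s, snd x k) \<in> XX"
  shows "Phi1 s A w = Phi1 s B w"
  using assms
proof (induction w arbitrary: A B)
  case Nil then show ?case by simp
next
  case (Cons x w)
  have "x \<in> Y" using Cons by simp
  then have h: "\<forall>k<s. ((fst x + k) mod s, snd x k) \<in> XX" using Cons by blast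
  have 1: "(\<lambda>k\<in>{..<s}. snd (hd (A k [((fst x + k) mod s, snd x k)])))
      = (\<lambda>k\<in>{..<s}. snd (hd (B k [((fst x + k) mod s, snd x k)])))"
    using Cons.prems(1) h by (intro restrict_ext) auto
  have 2: "Phi1 s (\<lambda>k v. tl (A k (((fst x + k) mod s, snd x k) # v))) w
     = Phi1 s (\<lambda>k v. tl (B k (((fst x + k) mod s, snd x k) # v))) w"
    by (rule Cons.IH) (use Cons.prems h in auto)
  show ?case using 1 2 by simp
qed

lemma adv1_inv:
  assumes "\<forall>a\<in>S. \<forall>x\<in>XX. restrict (\<lambda>v. tl (a (x # v))) {v. set v \<subseteq> XX} \<in> S"
    "\<forall>x\<in>Y. \<forall>k<s. ((fst x + k) mod s, snd x k) \<in> XX"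
    "\<forall>k<s. restrict (A k) {v. set v \<subseteq> XX} \<in> S" "set u \<subseteq> Y"
  shows "\<forall>k<s. restrict (adv1 s A u k) {v. set v \<subseteq> XX} \<in> S"
  using assms(3,4)
proof (induction u arbitrary: A)
  case Nil then show ?case by simp
next
  case (Cons x u)
  have h: "\<forall>k<s. ((fst x + k) mod s, snd x k) \<in> XX" using Cons.prems assms(2) by simp
  have "\<forall>k<s. restrict (\<lambda>v. tl (A k (((fst x + k) mod s, snd x k) # v))) {v. set v \<subseteq> XX} \<in> S"
  proof (intro allI impI)
    fix k assume k: "k < s"
    have "restrict (\<lambda>v. tl (A k (((fst x + k) mod s, snd x k) # v))) {v. set v \<subseteq> XX}
      = restrict (\<lambda>v. tl (restrict (A k) {v. set v \<subseteq> XX} (((fst x + k) mod s, snd x k) # v))) {v. set v \<subseteq> XX}"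
      using h k by (intro restrict_ext) auto
    moreover have "restrict (\<lambda>v. tl (restrict (A k) {v. set v \<subseteq> XX} (((fst x + k) mod s, snd x k) # v))) {v. set v \<subseteq> XX} \<in> S"
      using assms(1) Cons.prems(1) h k by blast
    ultimately show "restrict (\<lambda>v. tl (A k (((fst x + k) mod s, snd x k) # v))) {v. set v \<subseteq> XX} \<in> S"
      by (simp only:)
  qed
  then have "\<forall>k<s. restrict (adv1 s (\<lambda>k v. tl (A k (((fst x + k) mod s, snd x k) # v))) u k) {v. set v \<subseteq> XX} \<in> S"
    by (rule Cons.IH) (use Cons.prems in simp)
  then show ?case by (simp only: adv1.simps)
qed


fun Phi2 :: "nat \<Rightarrow> (nat \<Rightarrow> (nat \<times> 'a) list \<Rightarrow> (nat \<times> 'a) list) \<Rightarrow> (nat \<times> (nat \<Rightarrow> 'a)) list \<Rightarrow> (nat \<times> (nat \<Rightarrow> 'a)) list" where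
  "Phi2 s A [] = []"
| "Phi2 s A (x # w) = (if fst x = 0 then (0, \<lambda>k\<in>{..<s}. snd (hd (A k [(k, snd x k)])))
      # Phi2 s (\<lambda>k v. tl (A k ((k, snd x k) # v))) w
     else x # Phi2 s (\<lambda>k. A ((k + s - 1) mod s)) w)"

fun adv2 :: "nat \<Rightarrow> (nat \<Rightarrow> (nat \<times> 'a) list \<Rightarrow> (nat \<times> 'a) list) \<Rightarrow> (nat \<times> (nat \<Rightarrow> 'a)) list \<Rightarrow> (nat \<Rightarrow> (nat \<times> 'a) list \<Rightarrow> (nat \<times> 'a) list)" where
  "adv2 s A [] = A"
| "adv2 s A (x # w) = (if fst x = 0 then adv2 s (\<lambda>k v. tl (A k ((k, snd x k) # v))) w
     else adv2 s (\<lambda>k. A ((k + s - 1) mod s)) w)"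

lemma Phi2_append: "Phi2 s A (u @ w) = Phi2 s A u @ Phi2 s (adv2 s A u) w"
  by (induction u arbitrary: A) auto

lemma Phi2_length: "length (Phi2 s A u) = length u"
  by (induction u arbitrary: A) auto

lemma Phi2_cong:
  assumes "\<forall>k<s. \<forall>v. set v \<subseteq> XX \<longrightarrow> A k v = B k v" "set w \<subseteq> Y"
    "\<forall>x\<in>Y. fst x = 0 \<longrightarrow> (\<forall>k<s. (k, snd x k) \<in> XX)" "s > 0"
  shows "Phi2 s A w = Phi2 s B w"
  using assms
proof (induction w arbitrary: A B)
  case Nil then show ?case by simp
next
  case (Cons x w)
  show ?case
  proof (cases "fst x = 0")
    case True
    have "x \<in> Y" using Cons by simp
    then have h: "\<forall>k<s. (k, snd x k) \<in> XX" using Cons True by blast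
    have 1: "(\<lambda>k\<in>{..<s}. snd (hd (A k [(k, snd x k)])))
        = (\<lambda>k\<in>{..<s}. snd (hd (B k [(k, snd x k)])))"
      using Cons.prems(1) h by (intro restrict_ext) auto
    have 2: "Phi2 s (\<lambda>k v. tl (A k ((k, snd x k) # v))) w
       = Phi2 s (\<lambda>k v. tl (B k ((k, snd x k) # v))) w"
      by (rule Cons.IH) (use Cons.prems h in auto)
    show ?thesis using 1 2 True by simp
  next
    case False
    have 2: "Phi2 s (\<lambda>k. A ((k + s - 1) mod s)) w = Phi2 s (\<lambda>k. B ((k + s - 1) mod s)) w"
      by (rule Cons.IH) (use Cons.prems in auto)
    show ?thesis using 2 False by simp
  qed
qed

lemma adv2_inv:
  assumes "\<forall>a\<in>S. \<forall>x\<in>XX. restrict (\<lambda>v. tl (a (x # v))) {v. set v \<subseteq> XX} \<in> S"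
    "\<forall>x\<in>Y. fst x = 0 \<longrightarrow> (\<forall>k<s. (k, snd x k) \<in> XX)" "s > 0"
    "\<forall>k<s. restrict (A k) {v. set v \<subseteq> XX} \<in> S" "set u \<subseteq> Y"
  shows "\<forall>k<s. restrict (adv2 s A u k) {v. set v \<subseteq> XX} \<in> S"
  using assms(4,5)
proof (induction u arbitrary: A)
  case Nil then show ?case by simp
next
  case (Cons x u)
  show ?case
  proof (cases "fst x = 0")
    case True
    have h: "\<forall>k<s. (k, snd x k) \<in> XX" using Cons.prems assms(2) True by simp
    have "\<forall>k<s. restrict (\<lambda>v. tl (A k ((k, snd x k) # v))) {v. set v \<subseteq> XX} \<in> S"
    proof (intro allI impI)
      fix k assume k: "k < s"
      have "restrict (\<lambda>v. tl (A k ((k, snd x k) # v))) {v. set v \<subseteq> XX}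
        = restrict (\<lambda>v. tl (restrict (A k) {v. set v \<subseteq> XX} ((k, snd x k) # v))) {v. set v \<subseteq> XX}"
        using h k by (intro restrict_ext) auto
      moreover have "restrict (\<lambda>v. tl (restrict (A k) {v. set v \<subseteq> XX} ((k, snd x k) # v))) {v. set v \<subseteq> XX} \<in> S"
        using assms(1) Cons.prems(1) h k by blast
      ultimately show "restrict (\<lambda>v. tl (A k ((k, snd x k) # v))) {v. set v \<subseteq> XX} \<in> S"
        by (simp only:)
    qed
    then have "\<forall>k<s. restrict (adv2 s (\<lambda>k v. tl (A k ((k, snd x k) # v))) u k) {v. set v \<subseteq> XX} \<in> S"
      by (rule Cons.IH) (use Cons.prems in simp)
    then show ?thesis using True by (simp only: adv2.simps True if_True simp_thms)
  next
    case False
    have "\<forall>k<s. restrict ((\<lambda>k. A ((k + s - 1) mod s)) k) {v. set v \<subseteq> XX} \<in> S"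
    proof (intro allI impI)
      fix k assume "k < s"
      have "(k + s - 1) mod s < s" using assms(3) by simp
      then show "restrict ((\<lambda>k. A ((k + s - 1) mod s)) k) {v. set v \<subseteq> XX} \<in> S"
        using Cons.prems(1) by blast
    qed
    then have "\<forall>k<s. restrict (adv2 s (\<lambda>k. A ((k + s - 1) mod s)) u k) {v. set v \<subseteq> XX} \<in> S"
      by (rule Cons.IH) (use Cons.prems in simp)
    then show ?thesis using False by (simp only: adv2.simps if_False)
  qed
qed


context
  fixes G :: "('a, 'b) monoid_scheme" and H :: "'a set" and s m :: nat
    and f :: "nat \<Rightarrow> 'a \<Rightarrow> 'a" and Ts :: "nat \<Rightarrow> 'a set"
  assumes grp: "group G" and sub: "subgroup H G" and spos: "s \<ge> 1"
    and homs: "\<forall>i<s. f i \<in> hom (G\<lparr>carrier := H\<rparr>) G"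
    and trs: "\<forall>i<s. right_transversal G H (Ts i)"
begin

lemma f_carrier: "i < s \<Longrightarrow> h \<in> H \<Longrightarrow> f i h \<in> carrier G"
  using homs hom_in_carrier[of "f i" "G\<lparr>carrier := H\<rparr>" G h] by simp

lemma f_one: "i < s \<Longrightarrow> f i \<one>\<^bsub>G\<^esub> = \<one>\<^bsub>G\<^esub>"
  using homs hom_one[of "f i" "G\<lparr>carrier := H\<rparr>" G] group.subgroup_imp_group[OF grp sub] grp by simp

lemma f_mult: "i < s \<Longrightarrow> a \<in> H \<Longrightarrow> b \<in> H \<Longrightarrow> f i (a \<otimes>\<^bsub>G\<^esub> b) = f i a \<otimes>\<^bsub>G\<^esub> f i b"
  using homs hom_mult[of "f i" "G\<lparr>carrier := H\<rparr>" G a b] by simp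

lemma HC: "H \<subseteq> carrier G" by (rule subgroup.subset[OF sub])

lemma rho_hom: "rho_shift s f j \<in> hom ((power_group G s)\<lparr>carrier := power_set H s\<rparr>) (power_group G s)"
proof -
  have md: "\<And>k. k < s \<Longrightarrow> (j + k) mod s < s" using spos by simp
  show ?thesis
  unfolding hom_def
  proof (intro CollectI conjI ballI)
    show "rho_shift s f j \<in> carrier ((power_group G s)\<lparr>carrier := power_set H s\<rparr>) \<rightarrow> carrier (power_group G s)"
      using f_carrier md by (auto simp: rho_shift_def power_set_def PiE_iff)
    fix x y assume xy: "x \<in> carrier ((power_group G s)\<lparr>carrier := power_set H s\<rparr>)"
       "y \<in> carrier ((power_group G s)\<lparr>carrier := power_set H s\<rparr>)"
    then have "\<And>k. k < s \<Longrightarrow> x k \<in> H \<and> y k \<in> H" by (auto simp: power_set_def)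
    then show "rho_shift s f j (x \<otimes>\<^bsub>(power_group G s)\<lparr>carrier := power_set H s\<rparr>\<^esub> y) =
         rho_shift s f j x \<otimes>\<^bsub>power_group G s\<^esub> rho_shift s f j y"
      using f_mult md by (auto simp: rho_shift_def intro!: restrict_ext)
  qed
qed

lemma tau_hom: "tau_shift s \<in> hom ((power_group G s)\<lparr>carrier := carrier (power_group G s)\<rparr>) (power_group G s)"
proof -
  have md: "\<And>k. k < s \<Longrightarrow> (k + s - 1) mod s < s" using spos by simp
  show ?thesis
  unfolding hom_def
  proof (intro CollectI conjI ballI)
    show "tau_shift s \<in> carrier ((power_group G s)\<lparr>carrier := carrier (power_group G s)\<rparr>) \<rightarrow> carrier (power_group G s)"
      using md by (auto simp: tau_shift_def PiE_iff)
    fix x y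
    show "tau_shift s (x \<otimes>\<^bsub>(power_group G s)\<lparr>carrier := carrier (power_group G s)\<rparr>\<^esub> y) =
         tau_shift s x \<otimes>\<^bsub>power_group G s\<^esub> tau_shift s y"
      using md by (auto simp: tau_shift_def intro!: restrict_ext)
  qed
qed

lemma gk_carrier: "g \<in> carrier (power_group G s) \<Longrightarrow> k < s \<Longrightarrow> g k \<in> carrier G"
  by auto

lemma bridge1:
  assumes "g \<in> carrier (power_group G s)"
    and "set w \<subseteq> alphabet (map (\<lambda>j. (m ^ s, power_set H s, rho_shift s f j)) [0..<s])
                 (\<lambda>j. \<Pi>\<^sub>E k\<in>{..<s}. Ts ((j + k) mod s))"
  shows "phi_act (power_group G s) (map (\<lambda>j. (m ^ s, power_set H s, rho_shift s f j)) [0..<s])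
                 (\<lambda>j. \<Pi>\<^sub>E k\<in>{..<s}. Ts ((j + k) mod s)) g w
       = Phi1 s (\<lambda>k. phi_act G (map (\<lambda>i. (m, H, f i)) [0..<s]) Ts (g k)) w"
  using assms
proof (induction w arbitrary: g)
  case Nil then show ?case by simp
next
  case (Cons x w)
  let ?GS = "power_group G s"
  let ?D1 = "map (\<lambda>j. (m ^ s, power_set H s, rho_shift s f j)) [0..<s]"
  let ?Ts1 = "\<lambda>j. \<Pi>\<^sub>E k\<in>{..<s}. Ts ((j + k) mod s)"
  let ?D = "map (\<lambda>i. (m, H, f i)) [0..<s]"
  obtain j \<tau> where x: "x = (j, \<tau>)" by (cases x)
  have j: "j < s" and \<tau>: "\<tau> \<in> ?Ts1 j" using Cons.prems(2) x by (auto simp: alphabet_def)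
  have md: "\<And>k. k < s \<Longrightarrow> (j + k) mod s < s" using spos by simp
  have trs1: "\<forall>k<s. right_transversal G H (Ts ((j + k) mod s))" using trs md by simp
  have TC: "\<And>i. i < s \<Longrightarrow> Ts i \<subseteq> carrier G" using trs by (auto simp: right_transversal_def)
  have \<tau>C: "\<tau> \<in> carrier ?GS" by (rule PiE_carrier[OF _ \<tau>]) (use TC md in auto)
  have gGS: "group ?GS" using pg_group grp by blast
  define \<sigma> where "\<sigma> = \<tau> \<otimes>\<^bsub>?GS\<^esub> g"
  have \<sigma>C: "\<sigma> \<in> carrier ?GS" unfolding \<sigma>_def by (rule subgroup.m_closed[OF group.subgroup_self[OF gGS] \<tau>C Cons.prems(1)])
  have \<sigma>k: "\<And>k. k < s \<Longrightarrow> \<sigma> k = \<tau> k \<otimes>\<^bsub>G\<^esub> g k" by (simp add: \<sigma>_def)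
  define t' where "t' = (THE t'. t' \<in> ?Ts1 j \<and> power_set H s #>\<^bsub>?GS\<^esub> t' = power_set H s #>\<^bsub>?GS\<^esub> \<sigma>)"
  have t'eq: "t' = (\<lambda>k\<in>{..<s}. THE t. t \<in> Ts ((j + k) mod s) \<and> H #>\<^bsub>G\<^esub> t = H #>\<^bsub>G\<^esub> (\<tau> k \<otimes>\<^bsub>G\<^esub> g k))"
    unfolding t'_def prod_THE[OF grp sub trs1 \<sigma>C] using \<sigma>k by (intro restrict_ext) auto
  have t'p: "t' \<in> ?Ts1 j \<and> power_set H s #>\<^bsub>?GS\<^esub> t' = power_set H s #>\<^bsub>?GS\<^esub> \<sigma>"
    unfolding t'_def by (rule trans_THE[OF prod_transversal[OF grp sub trs1] \<sigma>C])
  have t'C: "t' \<in> carrier ?GS" by (rule PiE_carrier[OF _ t'p[THEN conjunct1]]) (use TC md in auto)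
  have inS: "\<sigma> \<otimes>\<^bsub>?GS\<^esub> inv\<^bsub>?GS\<^esub> t' \<in> power_set H s"
    using coset_eq_iff[OF gGS ps_subgroup[OF grp sub] \<sigma>C t'C] t'p by simp
  define g' where "g' = rho_shift s f j (\<sigma> \<otimes>\<^bsub>?GS\<^esub> inv\<^bsub>?GS\<^esub> t')"
  have g'C: "g' \<in> carrier ?GS" unfolding g'_def
    using hom_in_carrier[OF rho_hom[of j]] inS by simp
  have g'k: "\<And>k. k < s \<Longrightarrow> g' k = f ((j + k) mod s) (\<tau> k \<otimes>\<^bsub>G\<^esub> g k \<otimes>\<^bsub>G\<^esub> inv\<^bsub>G\<^esub> (t' k))"
    using t'C grp \<sigma>k by (simp add: g'_def rho_shift_def)
  have L: "phi_act ?GS ?D1 ?Ts1 g (x # w) = (j, t') # phi_act ?GS ?D1 ?Ts1 g' w"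
    using j x by (simp add: Let_def t'_def g'_def \<sigma>_def)
  have R: "Phi1 s (\<lambda>k. phi_act G ?D Ts (g k)) (x # w) =
     (j, \<lambda>k\<in>{..<s}. snd (hd (phi_act G ?D Ts (g k) [((j + k) mod s, \<tau> k)])))
      # Phi1 s (\<lambda>k v. tl (phi_act G ?D Ts (g k) (((j + k) mod s, \<tau> k) # v))) w"
    using x by simp
  have hd: "(\<lambda>k\<in>{..<s}. snd (hd (phi_act G ?D Ts (g k) [((j + k) mod s, \<tau> k)]))) = t'"
    unfolding t'eq using md by (intro restrict_ext) (simp add: Let_def)
  have tl: "Phi1 s (\<lambda>k. phi_act G ?D Ts (g' k)) w =
      Phi1 s (\<lambda>k v. tl (phi_act G ?D Ts (g k) (((j + k) mod s, \<tau> k) # v))) w"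
  proof (rule Phi1_cong[where XX=UNIV and Y=UNIV])
    show "\<forall>k<s. \<forall>v. set v \<subseteq> UNIV \<longrightarrow> phi_act G ?D Ts (g' k) v =
       tl (phi_act G ?D Ts (g k) (((j + k) mod s, \<tau> k) # v))"
      using g'k md t'eq by (simp add: Let_def)
  qed auto
  have IH: "phi_act ?GS ?D1 ?Ts1 g' w = Phi1 s (\<lambda>k. phi_act G ?D Ts (g' k)) w"
    using Cons.IH[OF g'C] Cons.prems(2) by simp
  show ?case using L R hd tl IH x by simp
qed

lemma bridge2:
  assumes "g \<in> carrier (power_group G s)"
    and "set w \<subseteq> alphabet [(m ^ s, power_set H s, rho_shift s f 0), (1, carrier (power_group G s), tau_shift s)]
                 (\<lambda>i. if i = 0 then \<Pi>\<^sub>E k\<in>{..<s}. Ts k else {\<one>\<^bsub>power_group G s\<^esub>})"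
  shows "phi_act (power_group G s) [(m ^ s, power_set H s, rho_shift s f 0), (1, carrier (power_group G s), tau_shift s)]
                 (\<lambda>i. if i = 0 then \<Pi>\<^sub>E k\<in>{..<s}. Ts k else {\<one>\<^bsub>power_group G s\<^esub>}) g w
       = Phi2 s (\<lambda>k. phi_act G (map (\<lambda>i. (m, H, f i)) [0..<s]) Ts (g k)) w"
  using assms
proof (induction w arbitrary: g)
  case Nil then show ?case by simp
next
  case (Cons x w)
  let ?GS = "power_group G s"
  let ?D2 = "[(m ^ s, power_set H s, rho_shift s f 0), (1, carrier (power_group G s), tau_shift s)]"
  let ?Ts2 = "\<lambda>i. if i = 0 then \<Pi>\<^sub>E k\<in>{..<s}. Ts k else {\<one>\<^bsub>power_group G s\<^esub>}"
  let ?D = "map (\<lambda>i. (m, H, f i)) [0..<s]"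
  obtain j \<tau> where x: "x = (j, \<tau>)" by (cases x)
  have j: "j < 2" and \<tau>: "\<tau> \<in> ?Ts2 j" using Cons.prems(2) x by (auto simp: alphabet_def)
  have TC: "\<And>i. i < s \<Longrightarrow> Ts i \<subseteq> carrier G" using trs by (auto simp: right_transversal_def)
  have gGS: "group ?GS" using pg_group grp by blast
  have s0: "s > 0" using spos by simp
  show ?case
  proof (cases "j = 0")
    case True
    have \<tau>': "\<tau> \<in> (\<Pi>\<^sub>E k\<in>{..<s}. Ts k)" using \<tau> True by simp
    have \<tau>C: "\<tau> \<in> carrier ?GS" by (rule PiE_carrier[OF _ \<tau>']) (use TC in auto)
    define \<sigma> where "\<sigma> = \<tau> \<otimes>\<^bsub>?GS\<^esub> g"
    have \<sigma>C: "\<sigma> \<in> carrier ?GS" unfolding \<sigma>_def by (rule subgroup.m_closed[OF group.subgroup_self[OF gGS] \<tau>C Cons.prems(1)])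
    have \<sigma>k: "\<And>k. k < s \<Longrightarrow> \<sigma> k = \<tau> k \<otimes>\<^bsub>G\<^esub> g k" by (simp add: \<sigma>_def)
    define t' where "t' = (THE t'. t' \<in> (\<Pi>\<^sub>E k\<in>{..<s}. Ts k) \<and> power_set H s #>\<^bsub>?GS\<^esub> t' = power_set H s #>\<^bsub>?GS\<^esub> \<sigma>)"
    have t'eq: "t' = (\<lambda>k\<in>{..<s}. THE t. t \<in> Ts k \<and> H #>\<^bsub>G\<^esub> t = H #>\<^bsub>G\<^esub> (\<tau> k \<otimes>\<^bsub>G\<^esub> g k))"
      unfolding t'_def prod_THE[OF grp sub trs \<sigma>C] using \<sigma>k by (intro restrict_ext) auto
    have t'p: "t' \<in> (\<Pi>\<^sub>E k\<in>{..<s}. Ts k) \<and> power_set H s #>\<^bsub>?GS\<^esub> t' = power_set H s #>\<^bsub>?GS\<^esub> \<sigma>"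
      unfolding t'_def by (rule trans_THE[OF prod_transversal[OF grp sub trs] \<sigma>C])
    have t'C: "t' \<in> carrier ?GS" by (rule PiE_carrier[OF _ t'p[THEN conjunct1]]) (use TC in auto)
    have inS: "\<sigma> \<otimes>\<^bsub>?GS\<^esub> inv\<^bsub>?GS\<^esub> t' \<in> power_set H s"
      using coset_eq_iff[OF gGS ps_subgroup[OF grp sub] \<sigma>C t'C] t'p by simp
    define g' where "g' = rho_shift s f 0 (\<sigma> \<otimes>\<^bsub>?GS\<^esub> inv\<^bsub>?GS\<^esub> t')"
    have g'C: "g' \<in> carrier ?GS" unfolding g'_def
      using hom_in_carrier[OF rho_hom[of 0]] inS by simp
    have g'k: "\<And>k. k < s \<Longrightarrow> g' k = f k (\<tau> k \<otimes>\<^bsub>G\<^esub> g k \<otimes>\<^bsub>G\<^esub> inv\<^bsub>G\<^esub> (t' k))"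
      using t'C grp \<sigma>k by (simp add: g'_def rho_shift_def)
    have L: "phi_act ?GS ?D2 ?Ts2 g (x # w) = (0, t') # phi_act ?GS ?D2 ?Ts2 g' w"
      using True x by (simp add: Let_def t'_def g'_def \<sigma>_def)
    have R: "Phi2 s (\<lambda>k. phi_act G ?D Ts (g k)) (x # w) =
       (0, \<lambda>k\<in>{..<s}. snd (hd (phi_act G ?D Ts (g k) [(k, \<tau> k)])))
        # Phi2 s (\<lambda>k v. tl (phi_act G ?D Ts (g k) ((k, \<tau> k) # v))) w"
      using x True by simp
    have hd: "(\<lambda>k\<in>{..<s}. snd (hd (phi_act G ?D Ts (g k) [(k, \<tau> k)]))) = t'"
      unfolding t'eq by (intro restrict_ext) (simp add: Let_def)
    have tl: "Phi2 s (\<lambda>k. phi_act G ?D Ts (g' k)) w =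
        Phi2 s (\<lambda>k v. tl (phi_act G ?D Ts (g k) ((k, \<tau> k) # v))) w"
    proof (rule Phi2_cong[where XX=UNIV and Y=UNIV])
      show "\<forall>k<s. \<forall>v. set v \<subseteq> UNIV \<longrightarrow> phi_act G ?D Ts (g' k) v =
         tl (phi_act G ?D Ts (g k) ((k, \<tau> k) # v))"
        using g'k t'eq by (simp add: Let_def)
    qed (use s0 in auto)
    have IH: "phi_act ?GS ?D2 ?Ts2 g' w = Phi2 s (\<lambda>k. phi_act G ?D Ts (g' k)) w"
      using Cons.IH[OF g'C] Cons.prems(2) by simp
    show ?thesis using L R hd tl IH x by simp
  next
    case False
    then have j1: "j = 1" using j by simp
    have \<tau>1: "\<tau> = \<one>\<^bsub>?GS\<^esub>" using \<tau> False by simp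
    have oneC: "\<one>\<^bsub>?GS\<^esub> \<in> carrier ?GS" by (rule monoid.one_closed[OF group.is_monoid[OF gGS]])
    have the1: "(THE t'. t' \<in> {\<one>\<^bsub>?GS\<^esub>} \<and> carrier ?GS #>\<^bsub>?GS\<^esub> t' = carrier ?GS #>\<^bsub>?GS\<^esub> (\<one>\<^bsub>?GS\<^esub> \<otimes>\<^bsub>?GS\<^esub> g))
       = \<one>\<^bsub>?GS\<^esub>"
    proof (rule the_equality)
      have "\<one>\<^bsub>?GS\<^esub> \<otimes>\<^bsub>?GS\<^esub> g \<in> carrier ?GS"
        by (rule subgroup.m_closed[OF group.subgroup_self[OF gGS] oneC Cons.prems(1)])
      then show "\<one>\<^bsub>?GS\<^esub> \<in> {\<one>\<^bsub>?GS\<^esub>} \<and> carrier ?GS #>\<^bsub>?GS\<^esub> \<one>\<^bsub>?GS\<^esub> = carrier ?GS #>\<^bsub>?GS\<^esub> (\<one>\<^bsub>?GS\<^esub> \<otimes>\<^bsub>?GS\<^esub> g)"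
        using subgroup.rcos_const[OF group.subgroup_self[OF gGS] gGS] oneC by simp
    qed simp
    have gst: "\<one>\<^bsub>?GS\<^esub> \<otimes>\<^bsub>?GS\<^esub> g \<otimes>\<^bsub>?GS\<^esub> inv\<^bsub>?GS\<^esub> \<one>\<^bsub>?GS\<^esub> = g"
    proof -
      have i1: "inv\<^bsub>?GS\<^esub> \<one>\<^bsub>?GS\<^esub> = \<one>\<^bsub>?GS\<^esub>" by (rule monoid.inv_one[OF group.is_monoid[OF gGS]])
      have l1: "\<one>\<^bsub>?GS\<^esub> \<otimes>\<^bsub>?GS\<^esub> g = g" by (rule monoid.l_one[OF group.is_monoid[OF gGS] Cons.prems(1)])
      have r1: "g \<otimes>\<^bsub>?GS\<^esub> \<one>\<^bsub>?GS\<^esub> = g" by (rule monoid.r_one[OF group.is_monoid[OF gGS] Cons.prems(1)])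
      show ?thesis by (simp only: i1 l1 r1)
    qed
    have L: "phi_act ?GS ?D2 ?Ts2 g (x # w) = x # phi_act ?GS ?D2 ?Ts2 (tau_shift s g) w"
    proof -
      have "phi_act ?GS ?D2 ?Ts2 g (x # w) = (1, \<one>\<^bsub>?GS\<^esub>) # phi_act ?GS ?D2 ?Ts2
          (tau_shift s (\<one>\<^bsub>?GS\<^esub> \<otimes>\<^bsub>?GS\<^esub> g \<otimes>\<^bsub>?GS\<^esub> inv\<^bsub>?GS\<^esub> \<one>\<^bsub>?GS\<^esub>)) w"
        using x j1 \<tau>1 the1 by (simp only: phi_act.simps Let_def fst_conv snd_conv) simp
      then show ?thesis using gst x j1 \<tau>1 by simp
    qed
    have tC: "tau_shift s g \<in> carrier ?GS"
      using hom_in_carrier[OF tau_hom] Cons.prems(1) by simp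
    have IH: "phi_act ?GS ?D2 ?Ts2 (tau_shift s g) w = Phi2 s (\<lambda>k. phi_act G ?D Ts (tau_shift s g k)) w"
      using Cons.IH[OF tC] Cons.prems(2) by simp
    have c: "Phi2 s (\<lambda>k. phi_act G ?D Ts (tau_shift s g k)) w = Phi2 s (\<lambda>k. phi_act G ?D Ts (g ((k + s - 1) mod s))) w"
      by (rule Phi2_cong[where XX=UNIV and Y=UNIV]) (use s0 in \<open>auto simp: tau_shift_def\<close>)
    show ?thesis using L IH c False x by simp
  qed
qed

lemma sec_closure:
  "\<forall>a\<in>{section_at XX (phi_act G' D Ts' (h k)) v | k v. k < s \<and> set v \<subseteq> XX}. \<forall>x\<in>XX.
     restrict (\<lambda>v. tl (a (x # v))) {v. set v \<subseteq> XX}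
       \<in> {section_at XX (phi_act G' D Ts' (h k)) v | k v. k < s \<and> set v \<subseteq> XX}"
proof (intro ballI)
  fix a x assume a: "a \<in> {section_at XX (phi_act G' D Ts' (h k)) v | k v. k < s \<and> set v \<subseteq> XX}"
    and x: "x \<in> XX"
  then obtain k v where kv: "k < s" "set v \<subseteq> XX" "a = section_at XX (phi_act G' D Ts' (h k)) v" by blast
  have eq: "restrict (\<lambda>v'. tl (a (x # v'))) {v. set v \<subseteq> XX} = section_at XX (phi_act G' D Ts' (h k)) (v @ [x])"
    unfolding section_at_def kv(3) using x by (intro restrict_ext) (auto simp: tl_drop drop_Suc)
  show "restrict (\<lambda>v. tl (a (x # v))) {v. set v \<subseteq> XX}
       \<in> {section_at XX (phi_act G' D Ts' (h k)) v | k v. k < s \<and> set v \<subseteq> XX}"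
    by (rule CollectI, rule exI[of _ k], rule exI[of _ "v @ [x]"]) (use kv x eq in auto)
qed

lemma sec_finite:
  assumes "\<forall>k<s. finite_state_aut XX (phi_act G' D Ts' (h k))"
  shows "finite {section_at XX (phi_act G' D Ts' (h k)) v | k v. k < s \<and> set v \<subseteq> XX}"
proof -
  have "{section_at XX (phi_act G' D Ts' (h k)) v | k v. k < s \<and> set v \<subseteq> XX}
     = (\<Union>k<s. {section_at XX (phi_act G' D Ts' (h k)) v | v. set v \<subseteq> XX})" by blast
  then show ?thesis using assms unfolding finite_state_aut_def by simp
qed

lemma sec_init: "restrict a {v. set v \<subseteq> XX} = section_at XX a []"
  unfolding section_at_def by simp

lemma fs1:
  assumes fsG: "\<forall>g\<in>carrier G. finite_state_aut (alphabet (map (\<lambda>i. (m, H, f i)) [0..<s]) Ts)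
                       (phi_act G (map (\<lambda>i. (m, H, f i)) [0..<s]) Ts g)"
  shows "finite_state_data (power_group G s) (map (\<lambda>j. (m ^ s, power_set H s, rho_shift s f j)) [0..<s])"
proof -
  let ?GS = "power_group G s"
  let ?D1 = "map (\<lambda>j. (m ^ s, power_set H s, rho_shift s f j)) [0..<s]"
  let ?Ts1 = "\<lambda>j. \<Pi>\<^sub>E k\<in>{..<s}. Ts ((j + k) mod s)"
  let ?D = "map (\<lambda>i. (m, H, f i)) [0..<s]"
  let ?Y = "alphabet ?D1 ?Ts1"
  let ?XX = "alphabet ?D Ts"
  have md: "\<And>j k. k < s \<Longrightarrow> (j + k) mod s < s" using spos by simp
  have T1: "\<forall>j<length ?D1. right_transversal ?GS (fst (snd (?D1!j))) (?Ts1 j)"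
    using prod_transversal[OF grp sub] trs md by simp
  have Yc: "\<forall>x\<in>?Y. \<forall>k<s. ((fst x + k) mod s, snd x k) \<in> ?XX"
    using md by (auto simp: alphabet_def PiE_iff)
  have "finite_state_aut ?Y (phi_act ?GS ?D1 ?Ts1 g)" if g: "g \<in> carrier ?GS" for g
  proof (rule section_restrict[where P="Phi1 s" and adv="adv1 s" and Az="\<lambda>k. phi_act G ?D Ts (g k)"
        and XX="?XX" and S="{section_at ?XX (phi_act G ?D Ts (g k)) v | k v. k < s \<and> set v \<subseteq> ?XX}"])
    fix u w assume "set u \<subseteq> ?Y" "set w \<subseteq> ?Y"
    then show "phi_act ?GS ?D1 ?Ts1 g (u @ w) = Phi1 s (\<lambda>k. phi_act G ?D Ts (g k)) u
       @ Phi1 s (adv1 s (\<lambda>k. phi_act G ?D Ts (g k)) u) w"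
      using bridge1[OF g, of "u @ w"] Phi1_append by simp
  next
    fix A :: "nat \<Rightarrow> (nat \<times> 'a) list \<Rightarrow> (nat \<times> 'a) list" and u :: "(nat \<times> (nat \<Rightarrow> 'a)) list"
    show "length (Phi1 s A u) = length u" by (rule Phi1_length)
  next
    fix A B :: "nat \<Rightarrow> (nat \<times> 'a) list \<Rightarrow> (nat \<times> 'a) list" and w :: "(nat \<times> (nat \<Rightarrow> 'a)) list"
    assume "\<forall>k<s. \<forall>v. set v \<subseteq> ?XX \<longrightarrow> A k v = B k v" "set w \<subseteq> ?Y"
    then show "Phi1 s A w = Phi1 s B w" using Phi1_cong Yc by blast
  next
    fix u assume u: "set u \<subseteq> ?Y"
    show "\<forall>k<s. restrict (adv1 s (\<lambda>k. phi_act G ?D Ts (g k)) u k) {v. set v \<subseteq> ?XX}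
       \<in> {section_at ?XX (phi_act G ?D Ts (g k)) v | k v. k < s \<and> set v \<subseteq> ?XX}"
    proof (rule adv1_inv[OF sec_closure Yc _ u])
      show "\<forall>k<s. restrict (phi_act G ?D Ts (g k)) {v. set v \<subseteq> ?XX}
       \<in> {section_at ?XX (phi_act G ?D Ts (g k)) v | k v. k < s \<and> set v \<subseteq> ?XX}"
        using sec_init by fastforce
    qed
  next
    show "finite {section_at ?XX (phi_act G ?D Ts (g k)) v | k v. k < s \<and> set v \<subseteq> ?XX}"
      by (rule sec_finite) (use fsG g in \<open>auto simp: PiE_iff\<close>)
  qed
  then have fs: "\<forall>g\<in>carrier ?GS. finite_state_aut ?Y (phi_act ?GS ?D1 ?Ts1 g)" by blast
  show ?thesis unfolding finite_state_data_def by (rule exI[where x="?Ts1"], rule conjI[OF T1 fs])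
qed

lemma fs2:
  assumes fsG: "\<forall>g\<in>carrier G. finite_state_aut (alphabet (map (\<lambda>i. (m, H, f i)) [0..<s]) Ts)
                       (phi_act G (map (\<lambda>i. (m, H, f i)) [0..<s]) Ts g)"
  shows "finite_state_data (power_group G s) [(m ^ s, power_set H s, rho_shift s f 0), (1, carrier (power_group G s), tau_shift s)]"
proof -
  let ?GS = "power_group G s"
  let ?D2 = "[(m ^ s, power_set H s, rho_shift s f 0), (1, carrier (power_group G s), tau_shift s)]"
  let ?Ts2 = "\<lambda>i. if i = 0 then \<Pi>\<^sub>E k\<in>{..<s}. Ts k else {\<one>\<^bsub>power_group G s\<^esub>}"
  let ?D = "map (\<lambda>i. (m, H, f i)) [0..<s]"
  let ?Y = "alphabet ?D2 ?Ts2"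
  let ?XX = "alphabet ?D Ts"
  have s0: "s > 0" using spos by simp
  have gGS: "group ?GS" using pg_group grp by blast
  have oneC: "\<one>\<^bsub>?GS\<^esub> \<in> carrier ?GS" by (rule monoid.one_closed[OF group.is_monoid[OF gGS]])
  have T2: "\<forall>j<length ?D2. right_transversal ?GS (fst (snd (?D2!j))) (?Ts2 j)"
  proof (intro allI impI)
    fix j assume "j < length ?D2"
    then have "j = 0 \<or> j = 1" by auto
    then show "right_transversal ?GS (fst (snd (?D2!j))) (?Ts2 j)"
    proof
      assume "j = 0" then show ?thesis using prod_transversal[OF grp sub trs] by simp
    next
      assume j: "j = 1"
      have "\<forall>g\<in>carrier ?GS. \<exists>!t. t \<in> {\<one>\<^bsub>?GS\<^esub>} \<and> carrier ?GS #>\<^bsub>?GS\<^esub> t = carrier ?GS #>\<^bsub>?GS\<^esub> g"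
        using subgroup.rcos_const[OF group.subgroup_self[OF gGS] gGS] oneC by auto
      then show ?thesis using j oneC unfolding right_transversal_def by simp
    qed
  qed
  have Yc: "\<forall>x\<in>?Y. fst x = 0 \<longrightarrow> (\<forall>k<s. (k, snd x k) \<in> ?XX)"
    by (auto simp: alphabet_def PiE_iff)
  have "finite_state_aut ?Y (phi_act ?GS ?D2 ?Ts2 g)" if g: "g \<in> carrier ?GS" for g
  proof (rule section_restrict[where P="Phi2 s" and adv="adv2 s" and Az="\<lambda>k. phi_act G ?D Ts (g k)"
        and XX="?XX" and S="{section_at ?XX (phi_act G ?D Ts (g k)) v | k v. k < s \<and> set v \<subseteq> ?XX}"])
    fix u w assume "set u \<subseteq> ?Y" "set w \<subseteq> ?Y"
    then show "phi_act ?GS ?D2 ?Ts2 g (u @ w) = Phi2 s (\<lambda>k. phi_act G ?D Ts (g k)) u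
       @ Phi2 s (adv2 s (\<lambda>k. phi_act G ?D Ts (g k)) u) w"
      using bridge2[OF g, of "u @ w"] Phi2_append by simp
  next
    fix A :: "nat \<Rightarrow> (nat \<times> 'a) list \<Rightarrow> (nat \<times> 'a) list" and u :: "(nat \<times> (nat \<Rightarrow> 'a)) list"
    show "length (Phi2 s A u) = length u" by (rule Phi2_length)
  next
    fix A B :: "nat \<Rightarrow> (nat \<times> 'a) list \<Rightarrow> (nat \<times> 'a) list" and w :: "(nat \<times> (nat \<Rightarrow> 'a)) list"
    assume "\<forall>k<s. \<forall>v. set v \<subseteq> ?XX \<longrightarrow> A k v = B k v" "set w \<subseteq> ?Y"
    then show "Phi2 s A w = Phi2 s B w" using Phi2_cong Yc s0 by blast
  next
    fix u assume u: "set u \<subseteq> ?Y"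
    show "\<forall>k<s. restrict (adv2 s (\<lambda>k. phi_act G ?D Ts (g k)) u k) {v. set v \<subseteq> ?XX}
       \<in> {section_at ?XX (phi_act G ?D Ts (g k)) v | k v. k < s \<and> set v \<subseteq> ?XX}"
    proof (rule adv2_inv[OF sec_closure Yc s0 _ u])
      show "\<forall>k<s. restrict (phi_act G ?D Ts (g k)) {v. set v \<subseteq> ?XX}
       \<in> {section_at ?XX (phi_act G ?D Ts (g k)) v | k v. k < s \<and> set v \<subseteq> ?XX}"
        using sec_init by fastforce
    qed
  next
    show "finite {section_at ?XX (phi_act G ?D Ts (g k)) v | k v. k < s \<and> set v \<subseteq> ?XX}"
      by (rule sec_finite) (use fsG g in \<open>auto simp: PiE_iff\<close>)
  qed
  then have fs: "\<forall>g\<in>carrier ?GS. finite_state_aut ?Y (phi_act ?GS ?D2 ?Ts2 g)" by blast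
  show ?thesis unfolding finite_state_data_def by (rule exI[where x="?Ts2"], rule conjI[OF T2 fs])
qed

lemma proj_normal:
  assumes K: "K \<lhd> power_group G s" and k: "k < s"
  shows "(\<lambda>x. x k) ` K \<lhd> G"
proof -
  let ?GS = "power_group G s"
  have gGS: "group ?GS" using pg_group grp by blast
  have Ksub: "subgroup K ?GS" by (rule normal_imp_subgroup[OF K])
  have KC: "K \<subseteq> carrier ?GS" by (rule subgroup.subset[OF Ksub])
  have conjK: "\<forall>x\<in>carrier ?GS. \<forall>h\<in>K. x \<otimes>\<^bsub>?GS\<^esub> h \<otimes>\<^bsub>?GS\<^esub> inv\<^bsub>?GS\<^esub> x \<in> K"
    using group.normal_inv_iff[OF gGS, THEN iffD1, OF K] by blast
  have sg: "subgroup ((\<lambda>x. x k) ` K) G"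
  proof (rule group.subgroupI[OF grp])
    show "(\<lambda>x. x k) ` K \<subseteq> carrier G" using KC k by auto
    show "(\<lambda>x. x k) ` K \<noteq> {}" using subgroup.one_closed[OF Ksub] by blast
  next
    fix a assume "a \<in> (\<lambda>x. x k) ` K"
    then obtain x where x: "x \<in> K" "a = x k" by blast
    have i1: "inv\<^bsub>?GS\<^esub> x \<in> K" by (rule subgroup.m_inv_closed[OF Ksub x(1)])
    have i2: "(inv\<^bsub>?GS\<^esub> x) k = inv\<^bsub>G\<^esub> a" using x KC k grp by auto
    show "inv\<^bsub>G\<^esub> a \<in> (\<lambda>x. x k) ` K" by (rule image_eqI[where f="\<lambda>x. x k", OF i2[symmetric] i1])
  next
    fix a b assume "a \<in> (\<lambda>x. x k) ` K" "b \<in> (\<lambda>x. x k) ` K"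
    then obtain x y where xy: "x \<in> K" "a = x k" "y \<in> K" "b = y k" by blast
    have i1: "x \<otimes>\<^bsub>?GS\<^esub> y \<in> K" by (rule subgroup.m_closed[OF Ksub xy(1,3)])
    have i2: "(x \<otimes>\<^bsub>?GS\<^esub> y) k = a \<otimes>\<^bsub>G\<^esub> b" using xy k by simp
    show "a \<otimes>\<^bsub>G\<^esub> b \<in> (\<lambda>x. x k) ` K" by (rule image_eqI[where f="\<lambda>x. x k", OF i2[symmetric] i1])
  qed
  have "\<forall>g\<in>carrier G. \<forall>h\<in>(\<lambda>x. x k) ` K. g \<otimes>\<^bsub>G\<^esub> h \<otimes>\<^bsub>G\<^esub> inv\<^bsub>G\<^esub> g \<in> (\<lambda>x. x k) ` K"
  proof (intro ballI)
    fix g h assume g: "g \<in> carrier G" and "h \<in> (\<lambda>x. x k) ` K"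
    then obtain x where x: "x \<in> K" "h = x k" by blast
    define g' where "g' = (\<lambda>i\<in>{..<s}. if i = k then g else \<one>\<^bsub>G\<^esub>)"
    have g'C: "g' \<in> carrier ?GS" using g monoid.one_closed[OF group.is_monoid[OF grp]] by (auto simp: g'_def)
    have i1: "g' \<otimes>\<^bsub>?GS\<^esub> x \<otimes>\<^bsub>?GS\<^esub> inv\<^bsub>?GS\<^esub> g' \<in> K" using conjK g'C x by blast
    have i2: "(g' \<otimes>\<^bsub>?GS\<^esub> x \<otimes>\<^bsub>?GS\<^esub> inv\<^bsub>?GS\<^esub> g') k = g \<otimes>\<^bsub>G\<^esub> h \<otimes>\<^bsub>G\<^esub> inv\<^bsub>G\<^esub> g"
      using g'C grp k x by (simp add: g'_def)
    show "g \<otimes>\<^bsub>G\<^esub> h \<otimes>\<^bsub>G\<^esub> inv\<^bsub>G\<^esub> g \<in> (\<lambda>x. x k) ` K" by (rule image_eqI[where f="\<lambda>x. x k", OF i2[symmetric] i1])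
  qed
  then show ?thesis using group.normal_inv_iff[OF grp, THEN iffD2] sg by blast
qed

lemma one_normal_GS: "{\<one>\<^bsub>power_group G s\<^esub>} \<lhd> power_group G s"
proof -
  have gGS: "group (power_group G s)" using pg_group grp by blast
  show ?thesis
  proof (rule group.normal_inv_iff[OF gGS, THEN iffD2], intro conjI ballI)
    show "subgroup {\<one>\<^bsub>power_group G s\<^esub>} (power_group G s)" by (rule group.triv_subgroup[OF gGS])
    fix x h assume x: "x \<in> carrier (power_group G s)" and h: "h \<in> {\<one>\<^bsub>power_group G s\<^esub>}"
    have h1: "h = \<one>\<^bsub>power_group G s\<^esub>" using h by blast
    have r1: "x \<otimes>\<^bsub>power_group G s\<^esub> \<one>\<^bsub>power_group G s\<^esub> = x" by (rule monoid.r_one[OF group.is_monoid[OF gGS] x])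
    have ri: "x \<otimes>\<^bsub>power_group G s\<^esub> inv\<^bsub>power_group G s\<^esub> x = \<one>\<^bsub>power_group G s\<^esub>" by (rule group.r_inv[OF gGS x])
    show "x \<otimes>\<^bsub>power_group G s\<^esub> h \<otimes>\<^bsub>power_group G s\<^esub> inv\<^bsub>power_group G s\<^esub> x \<in> {\<one>\<^bsub>power_group G s\<^esub>}"
      unfolding h1 r1 ri by (rule singletonI)
  qed
qed

lemma cand_proj:
  assumes K: "Fcore_cand (power_group G s) D' K" and k: "k < s"
    and sub': "K \<subseteq> power_set H s"
    and inv': "\<forall>i<s. \<forall>x\<in>K. f i (x k) \<in> (\<lambda>x. x k) ` K"
  shows "Fcore_cand G (map (\<lambda>i. (m, H, f i)) [0..<s]) ((\<lambda>x. x k) ` K)"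
proof -
  have N: "(\<lambda>x. x k) ` K \<lhd> G" using proj_normal K k unfolding Fcore_cand_def by blast
  have PH: "(\<lambda>x. x k) ` K \<subseteq> H" using sub' k by (auto simp: power_set_def)
  show ?thesis unfolding Fcore_cand_def using N PH inv' spos
    by (auto simp: normal_def)
qed

lemma prod_eq_one:
  assumes "x \<in> carrier (power_group G s)" "\<forall>k<s. x k = \<one>\<^bsub>G\<^esub>"
  shows "x = \<one>\<^bsub>power_group G s\<^esub>"
  using assms by (auto simp: PiE_iff intro!: extensionalityI)

lemma simple1:
  assumes simp0: "simple_data G (map (\<lambda>i. (m, H, f i)) [0..<s])"
  shows "simple_data (power_group G s) (map (\<lambda>j. (m ^ s, power_set H s, rho_shift s f j)) [0..<s])"
proof -
  let ?GS = "power_group G s"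
  let ?D1 = "map (\<lambda>j. (m ^ s, power_set H s, rho_shift s f j)) [0..<s]"
  have gGS: "group ?GS" using pg_group grp by blast
  have md: "\<And>j k. k < s \<Longrightarrow> (j + k) mod s < s" using spos by simp
  have one_ps: "\<one>\<^bsub>?GS\<^esub> \<in> power_set H s" using subgroup.one_closed[OF ps_subgroup[OF grp sub]] .
  have rho1: "\<And>j. rho_shift s f j \<one>\<^bsub>?GS\<^esub> = \<one>\<^bsub>?GS\<^esub>"
    using f_one md by (auto simp: rho_shift_def intro!: restrict_ext)
  have cand: "Fcore_cand ?GS ?D1 {\<one>\<^bsub>?GS\<^esub>}"
    unfolding Fcore_cand_def using group.triv_subgroup[OF gGS] one_ps one_normal_GS rho1 spos by auto
  have "K \<subseteq> {\<one>\<^bsub>?GS\<^esub>}" if K: "Fcore_cand ?GS ?D1 K" for K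
  proof
    fix x assume x: "x \<in> K"
    have sub': "K \<subseteq> power_set H s" using K spos unfolding Fcore_cand_def by auto
    have KC: "K \<subseteq> carrier ?GS" using subgroup.subset[of K "power_group G s"] K unfolding Fcore_cand_def by simp
    have "x k = \<one>\<^bsub>G\<^esub>" if k: "k < s" for k
    proof -
      have "\<forall>i<s. \<forall>y\<in>K. f i (y k) \<in> (\<lambda>x. x k) ` K"
      proof (intro allI impI ballI)
        fix i y assume i: "i < s" and y: "y \<in> K"
        define j where "j = (i + s - k) mod s"
        have j: "j < s" using md[of 0 "i + s - k"] spos by (simp add: j_def)
        have jk: "(j + k) mod s = i" unfolding j_def using i k
          by (metis add.commute le_add_diff_inverse2 less_imp_le_nat mod_add_left_eq mod_add_self2 mod_less le_add2 add_le_mono1 order.trans)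
        have "\<forall>i<length (map (\<lambda>j. (m ^ s, power_set H s, rho_shift s f j)) [0..<s]).
           K \<subseteq> fst (snd (map (\<lambda>j. (m ^ s, power_set H s, rho_shift s f j)) [0..<s] ! i)) \<and>
           snd (snd (map (\<lambda>j. (m ^ s, power_set H s, rho_shift s f j)) [0..<s] ! i)) ` K \<subseteq> K"
          using K unfolding Fcore_cand_def by blast
        then have "rho_shift s f j ` K \<subseteq> K" using j by simp
        then have i1: "rho_shift s f j y \<in> K" using y by blast
        have i2: "rho_shift s f j y k = f i (y k)" using k jk by (simp add: rho_shift_def)
        show "f i (y k) \<in> (\<lambda>x. x k) ` K" by (rule image_eqI[where f="\<lambda>x. x k", OF i2[symmetric] i1])
      qed
      then have "Fcore_cand G (map (\<lambda>i. (m, H, f i)) [0..<s]) ((\<lambda>x. x k) ` K)"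
        using cand_proj[OF K k sub'] by blast
      then have "(\<lambda>x. x k) ` K \<subseteq> {\<one>\<^bsub>G\<^esub>}" using simp0 unfolding simple_data_def is_Fcore_def by blast
      then show ?thesis using x by blast
    qed
    then show "x \<in> {\<one>\<^bsub>?GS\<^esub>}" using prod_eq_one KC x by blast
  qed
  then show ?thesis unfolding simple_data_def is_Fcore_def using cand by blast
qed

lemma chain_sub:
  assumes "\<forall>k. k + 1 < s \<longrightarrow> P k \<subseteq> P (k + 1)" "i \<le> j" "j < s"
  shows "P i \<subseteq> (P j :: 'c set)"
  using assms(2,3)
proof (induction j)
  case 0 then show ?case by simp
next
  case (Suc j)
  show ?case
  proof (cases "i = Suc j")
    case True then show ?thesis by simp
  next
    case False
    then have "P i \<subseteq> P j" using Suc by simp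
    also have "P j \<subseteq> P (Suc j)" using assms(1) Suc.prems by simp
    finally show ?thesis .
  qed
qed

lemma simple2:
  assumes simp0: "simple_data G (map (\<lambda>i. (m, H, f i)) [0..<s])"
  shows "simple_data (power_group G s) [(m ^ s, power_set H s, rho_shift s f 0), (1, carrier (power_group G s), tau_shift s)]"
proof -
  let ?GS = "power_group G s"
  let ?D2 = "[(m ^ s, power_set H s, rho_shift s f 0), (1, carrier (power_group G s), tau_shift s)]"
  have gGS: "group ?GS" using pg_group grp by blast
  have md: "\<And>j k. k < s \<Longrightarrow> (j + k) mod s < s" using spos by simp
  have one_ps: "\<one>\<^bsub>?GS\<^esub> \<in> power_set H s" using subgroup.one_closed[OF ps_subgroup[OF grp sub]] .
  have oneC: "\<one>\<^bsub>?GS\<^esub> \<in> carrier ?GS" by (rule monoid.one_closed[OF group.is_monoid[OF gGS]])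
  have rho1: "\<And>j. rho_shift s f j \<one>\<^bsub>?GS\<^esub> = \<one>\<^bsub>?GS\<^esub>"
    using f_one md by (auto simp: rho_shift_def intro!: restrict_ext)
  have tau1: "tau_shift s \<one>\<^bsub>?GS\<^esub> = \<one>\<^bsub>?GS\<^esub>"
    using md by (auto simp: tau_shift_def intro!: restrict_ext)
  have cand: "Fcore_cand ?GS ?D2 {\<one>\<^bsub>?GS\<^esub>}"
    unfolding Fcore_cand_def using group.triv_subgroup[OF gGS] one_ps oneC one_normal_GS rho1 tau1
    by (auto simp: less_Suc_eq)
  have "K \<subseteq> {\<one>\<^bsub>?GS\<^esub>}" if K: "Fcore_cand ?GS ?D2 K" for K
  proof
    fix x assume x: "x \<in> K"
    have c: "\<forall>i<length ?D2. K \<subseteq> fst (snd (?D2!i)) \<and> snd (snd (?D2!i)) ` K \<subseteq> K"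
      using K unfolding Fcore_cand_def by blast
    have c0: "K \<subseteq> power_set H s \<and> rho_shift s f 0 ` K \<subseteq> K" using c[rule_format, of 0] by simp
    have c1: "tau_shift s ` K \<subseteq> K" using c[rule_format, of 1] by simp
    have sub': "K \<subseteq> power_set H s" using c0 by blast
    have KC: "K \<subseteq> carrier ?GS" using subgroup.subset[of K "power_group G s"] K unfolding Fcore_cand_def by simp
    have rhoK: "\<forall>y\<in>K. rho_shift s f 0 y \<in> K" using c0 by blast
    have tauK: "\<forall>y\<in>K. tau_shift s y \<in> K" using c1 by blast
    define P where "P = (\<lambda>k. (\<lambda>x. x k) ` K)"
    have step: "\<forall>k. k + 1 < s \<longrightarrow> P k \<subseteq> P (k + 1)"
    proof (intro allI impI subsetI)
      fix k z assume k: "k + 1 < s" and "z \<in> P k"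
      then obtain y where y: "y \<in> K" "z = y k" by (auto simp: P_def)
      have "tau_shift s y (k + 1) = y k" using k by (simp add: tau_shift_def)
      then have e: "z = (\<lambda>x. x (k + 1)) (tau_shift s y)" using y by simp
      show "z \<in> P (k + 1)" unfolding P_def by (rule image_eqI[where f="\<lambda>x. x (k + 1)" and x="tau_shift s y", OF e]) (use tauK y in blast)
    qed
    have Pi_mem: "\<And>i y. y \<in> K \<Longrightarrow> y i \<in> P i"
    proof -
      fix i y assume yK: "y \<in> K"
      show "y i \<in> P i" unfolding P_def
        by (rule image_eqI[where f="\<lambda>x. x i" and x=y]) (simp_all add: yK)
    qed
    have wrap: "P (s - 1) \<subseteq> P 0"
    proof
      fix z assume "z \<in> P (s - 1)"
      then obtain y where y: "y \<in> K" "z = y (s - 1)" by (auto simp: P_def)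
      have "tau_shift s y 0 = y (s - 1)" using spos by (simp add: tau_shift_def)
      then have "z = tau_shift s y 0" using y by simp
      moreover have "tau_shift s y 0 \<in> P 0" using Pi_mem tauK y by blast
      ultimately show "z \<in> P 0" by simp
    qed
    have Peq: "\<And>k. k < s \<Longrightarrow> P k = P 0"
    proof -
      fix k assume k: "k < s"
      have "P 0 \<subseteq> P k" using chain_sub[OF step, of 0 k] k by simp
      moreover have "P k \<subseteq> P (s - 1)" using chain_sub[OF step, of k "s - 1"] k spos by simp
      ultimately show "P k = P 0" using wrap by blast
    qed
    have rhoP: "\<And>i u. i < s \<Longrightarrow> u \<in> P i \<Longrightarrow> f i u \<in> P i"
    proof -
      fix i u assume i: "i < s" and u: "u \<in> P i"
      then obtain y' where y': "y' \<in> K" "u = y' i" by (auto simp: P_def)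
      have "rho_shift s f 0 y' i = f i u" using i y' by (simp add: rho_shift_def)
      moreover have "rho_shift s f 0 y' i \<in> P i" using Pi_mem rhoK y' by blast
      ultimately show "f i u \<in> P i" by simp
    qed
    have "\<forall>i<s. \<forall>y\<in>K. f i (y 0) \<in> (\<lambda>x. x 0) ` K"
    proof (intro allI impI ballI)
      fix i y assume i: "i < s" and y: "y \<in> K"
      have "y 0 \<in> P i" using Pi_mem[OF y, of 0] Peq[OF i] by simp
      then have "f i (y 0) \<in> P i" by (rule rhoP[OF i])
      then have "f i (y 0) \<in> P 0" using Peq[OF i] by simp
      then show "f i (y 0) \<in> (\<lambda>x. x 0) ` K" by (simp add: P_def)
    qed
    then have "Fcore_cand G (map (\<lambda>i. (m, H, f i)) [0..<s]) ((\<lambda>x. x 0) ` K)"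
      using cand_proj[OF K _ sub'] spos by simp
    then have "P 0 \<subseteq> {\<one>\<^bsub>G\<^esub>}" using simp0 unfolding simple_data_def is_Fcore_def P_def by blast
    then have "\<forall>k<s. x k = \<one>\<^bsub>G\<^esub>" using Peq Pi_mem[OF x] by blast
    then show "x \<in> {\<one>\<^bsub>?GS\<^esub>}" using prod_eq_one KC x by blast
  qed
  then show ?thesis unfolding simple_data_def is_Fcore_def using cand by blast
qed

lemma gdata:
  assumes fin: "finite (rcosets\<^bsub>G\<^esub> H)" and cd: "card (rcosets\<^bsub>G\<^esub> H) = m"
  shows "G_data (power_group G s) (map (\<lambda>j. (m ^ s, power_set H s, rho_shift s f j)) [0..<s])
    \<and> G_data (power_group G s) [(m ^ s, power_set H s, rho_shift s f 0), (1, carrier (power_group G s), tau_shift s)]"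
proof -
  let ?GS = "power_group G s"
  have gGS: "group ?GS" using pg_group grp by blast
  have oneC: "\<one>\<^bsub>?GS\<^esub> \<in> carrier ?GS" by (rule monoid.one_closed[OF group.is_monoid[OF gGS]])
  have b: "bij_betw (\<lambda>t. power_set H s #>\<^bsub>?GS\<^esub> t) (\<Pi>\<^sub>E k\<in>{..<s}. Ts k) (rcosets\<^bsub>?GS\<^esub> (power_set H s))"
    by (rule trans_bij[OF gGS ps_subgroup[OF grp sub] prod_transversal[OF grp sub trs]])
  have bk: "\<And>k. k < s \<Longrightarrow> bij_betw (\<lambda>t. H #>\<^bsub>G\<^esub> t) (Ts k) (rcosets\<^bsub>G\<^esub> H)"
    using trans_bij[OF grp sub] trs by blast
  have ck: "\<And>k. k < s \<Longrightarrow> card (Ts k) = m \<and> finite (Ts k)"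
  proof -
    fix k assume k: "k < s"
    have "card (Ts k) = card (rcosets\<^bsub>G\<^esub> H)" by (rule bij_betw_same_card[OF bk[OF k]])
    moreover have "finite (Ts k) = finite (rcosets\<^bsub>G\<^esub> H)" by (rule bij_betw_finite[OF bk[OF k]])
    ultimately show "card (Ts k) = m \<and> finite (Ts k)" using fin cd by simp
  qed
  have "card (\<Pi>\<^sub>E k\<in>{..<s}. Ts k) = m ^ s"
    using ck by (simp add: card_PiE)
  moreover have "finite (\<Pi>\<^sub>E k\<in>{..<s}. Ts k)" by (rule finite_PiE) (use ck in auto)
  ultimately have P: "finite (rcosets\<^bsub>?GS\<^esub> (power_set H s)) \<and> card (rcosets\<^bsub>?GS\<^esub> (power_set H s)) = m ^ s"
    using bij_betw_same_card[OF b] bij_betw_finite[OF b] by simp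
  have t1: "right_transversal ?GS (carrier ?GS) {\<one>\<^bsub>?GS\<^esub>}"
  proof -
    have "\<forall>g\<in>carrier ?GS. \<exists>!t. t \<in> {\<one>\<^bsub>?GS\<^esub>} \<and> carrier ?GS #>\<^bsub>?GS\<^esub> t = carrier ?GS #>\<^bsub>?GS\<^esub> g"
      using subgroup.rcos_const[OF group.subgroup_self[OF gGS] gGS] oneC by auto
    then show ?thesis using oneC unfolding right_transversal_def by simp
  qed
  have "bij_betw (\<lambda>t. carrier ?GS #>\<^bsub>?GS\<^esub> t) {\<one>\<^bsub>?GS\<^esub>} (rcosets\<^bsub>?GS\<^esub> (carrier ?GS))"
    by (rule trans_bij[OF gGS group.subgroup_self[OF gGS] t1])
  then have q1: "card {\<one>\<^bsub>?GS\<^esub>} = card (rcosets\<^bsub>?GS\<^esub> (carrier ?GS))"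
     and q2: "finite {\<one>\<^bsub>?GS\<^esub>} = finite (rcosets\<^bsub>?GS\<^esub> (carrier ?GS))"
    by (rule bij_betw_same_card, rule bij_betw_finite)
  have Q: "finite (rcosets\<^bsub>?GS\<^esub> (carrier ?GS)) \<and> card (rcosets\<^bsub>?GS\<^esub> (carrier ?GS)) = 1"
    using q1 q2 by simp
  have S: "subgroup (power_set H s) ?GS" by (rule ps_subgroup[OF grp sub])
  show ?thesis unfolding G_data_def
    using gGS P Q S rho_hom tau_hom group.subgroup_self[OF gGS] by (auto simp: less_Suc_eq)
qed

end

theorem mainTheorem6:
  fixes G :: "('a, 'b) monoid_scheme" and H :: "'a set" and m s :: nat
    and f :: "nat \<Rightarrow> 'a \<Rightarrow> 'a"
  assumes "group G" and "s \<ge> 1"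
    and "subgroup H G" and "finite (rcosets\<^bsub>G\<^esub> H)" and "card (rcosets\<^bsub>G\<^esub> H) = m"
    and "\<forall>i < s. f i \<in> hom (G\<lparr>carrier := H\<rparr>) G"
    and "G_data G (map (\<lambda>i. (m, H, f i)) [0..<s])"
    and "simple_data G (map (\<lambda>i. (m, H, f i)) [0..<s])"
    and "finite_state_data G (map (\<lambda>i. (m, H, f i)) [0..<s])"
  shows
    "G_data (power_group G s) (map (\<lambda>j. (m ^ s, power_set H s, rho_shift s f j)) [0..<s])
     \<and> simple_data (power_group G s) (map (\<lambda>j. (m ^ s, power_set H s, rho_shift s f j)) [0..<s])
     \<and> finite_state_data (power_group G s) (map (\<lambda>j. (m ^ s, power_set H s, rho_shift s f j)) [0..<s])
     \<and> G_data (power_group G s) [(m ^ s, power_set H s, rho_shift s f 0), (1, carrier (power_group G s), tau_shift s)]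
     \<and> simple_data (power_group G s) [(m ^ s, power_set H s, rho_shift s f 0), (1, carrier (power_group G s), tau_shift s)]
     \<and> finite_state_data (power_group G s) [(m ^ s, power_set H s, rho_shift s f 0), (1, carrier (power_group G s), tau_shift s)]"
proof -
  obtain Ts where Ts: "\<forall>i<s. right_transversal G H (Ts i)"
    and fsG: "\<forall>g\<in>carrier G. finite_state_aut (alphabet (map (\<lambda>i. (m, H, f i)) [0..<s]) Ts)
                       (phi_act G (map (\<lambda>i. (m, H, f i)) [0..<s]) Ts g)"
    using assms(9) unfolding finite_state_data_def by auto
  note ctx = assms(1,3,2,6) Ts
  show ?thesis
    using gdata[OF ctx assms(4,5)] simple1[OF ctx assms(8)] simple2[OF ctx assms(8)]
      fs1[OF ctx fsG] fs2[OF ctx fsG] by blast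
qed

end
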